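(* Let $f:\mathbb{F}_q^k\to\mathrm{Im}(f)$ and let $d_d<d_f$ be nonnegative integers. Let $L=\max_{\alpha\in\mathrm{Im}(f)}|f^{-1}(\alpha)|$. Then $$r_f(k:d_d,d_f)\ge\frac{(L-1)d_d+(q^k-L)d_f}{q^{k-1}(q-1)}-k.$$
   Context: $d(\cdot,\cdot)$ is Hamming distance; $f^{-1}(\alpha)=\{u:f(u)=\alpha\}$. For integers $0\le d_d\le d_f$, an $(f\!:d_d,d_f)$-FCC with redundancy $r$ is a systematic encoding $\mathfrak{C}_f(u)=(u,p_u)\in\mathbb{F}_q^{k+r}$ with $d(\mathfrak{C}_f(u_1),\mathfrak{C}_f(u_2))\ge d_d$ whenever $u_1\ne u_2$ and $\ge d_f$ whenever $f(u_1)\ne f(u_2)$; $r_f(k:d_d,d_f)$ is the minimum such $r$. *)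

theory Defs
  imports Complex_Main
begin

text \<open>Vectors in F_q^n are lists of length n over a finite field type.\<close>

definition words :: "nat \<Rightarrow> 'a list set" where
  "words n = {u. length u = n}"

definition hamming :: "'a list \<Rightarrow> 'a list \<Rightarrow> nat" where
  "hamming x y = card {i. i < length x \<and> x ! i \<noteq> y ! i}"

text \<open>Systematic encoding u |-> (u, p u) with redundancy r is an (f: dd, df)-FCC.\<close>
definition is_FCC :: "('a list \<Rightarrow> 'b) \<Rightarrow> nat \<Rightarrow> nat \<Rightarrow> nat \<Rightarrow> nat \<Rightarrow> ('a list \<Rightarrow> 'a list) \<Rightarrow> bool" where
  "is_FCC f k dd df r p \<longleftrightarrow>
     (\<forall>u\<in>words k. length (p u) = r) \<and>
     (\<forall>u1\<in>words k. \<forall>u2\<in>words k. u1 \<noteq> u2 \<longrightarrow> dd \<le> hamming (u1 @ p u1) (u2 @ p u2)) \<and>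
     (\<forall>u1\<in>words k. \<forall>u2\<in>words k. f u1 \<noteq> f u2 \<longrightarrow> df \<le> hamming (u1 @ p u1) (u2 @ p u2))"

definition r_f :: "('a list \<Rightarrow> 'b) \<Rightarrow> nat \<Rightarrow> nat \<Rightarrow> nat \<Rightarrow> nat" where
  "r_f f k dd df = (LEAST r. \<exists>p. is_FCC f k dd df r p)"

definition max_preimage :: "('a list \<Rightarrow> 'b) \<Rightarrow> nat \<Rightarrow> nat" where
  "max_preimage f k = Max ((\<lambda>\<alpha>. card {u\<in>words k. f u = \<alpha>}) ` (f ` words k))"

end

theory Submission
  imports Defs
begin

lemma hamming_sum: "hamming x y = (\<Sum>i<length x. if x!i \<noteq> y!i then 1 else 0)"
  unfolding hamming_def
  by (simp add: sum.If_cases Int_def lessThan_def conj_commute)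

lemma hamming_Cons: "hamming (x#a) (y#c) = (if x \<noteq> y then 1 else 0) + hamming a c"
  unfolding hamming_sum length_Cons sum.lessThan_Suc_shift by simp

lemma hamming_Nil: "hamming [] [] = 0" by (simp add: hamming_def)

lemma hamming_append: "length a = length c \<Longrightarrow> hamming (a@b) (c@d) = hamming a c + hamming b d"
proof (induction a arbitrary: c)
  case Nil then show ?case by (simp add: hamming_def)
next
  case (Cons x a)
  then obtain y c' where "c = y # c'" by (cases c) auto
  with Cons show ?case by (simp add: hamming_Cons)
qed

lemma hamming_rep: "length a = length c \<Longrightarrow>
  hamming (concat (replicate m a)) (concat (replicate m c)) = m * hamming a c"
  by (induction m) (auto simp: hamming_append hamming_Nil)

lemma hamming_pos: "length a = length c \<Longrightarrow> a \<noteq> c \<Longrightarrow> 1 \<le> hamming a c"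
proof -
  assume l: "length a = length c" and ne: "a \<noteq> c"
  then obtain i where "i < length a" "a!i \<noteq> c!i" using nth_equalityI by blast
  then have "{i. i < length a \<and> a ! i \<noteq> c ! i} \<noteq> {}" by blast
  then show ?thesis unfolding hamming_def
    by (simp add: Suc_le_eq card_gt_0_iff)
qed

lemma FCC_exists: fixes f :: "'a list \<Rightarrow> 'b" assumes that: "dd < df" shows "\<exists>r p. is_FCC f k dd df r p"
proof -
  define p where "p = (\<lambda>u::'a list. concat (replicate df u))"
  have "is_FCC f k dd df (df*k) p"
    unfolding is_FCC_def
  proof (intro conjI ballI impI)
    fix u :: "'a list" assume "u \<in> words k" then show "length (p u) = df*k"
      by (simp add: p_def words_def length_concat sum_list_replicate)
  next
    fix u1 u2 :: "'a list" assume a: "u1 \<in> words k" "u2 \<in> words k" "u1 \<noteq> u2"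
    then have l: "length u1 = length u2" by (simp add: words_def)
    have "hamming (u1 @ p u1) (u2 @ p u2) = (Suc df) * hamming u1 u2"
      using l by (simp add: p_def hamming_append hamming_rep)
    moreover have "1 \<le> hamming u1 u2" using hamming_pos l a by blast
    moreover have "Suc df * 1 \<le> Suc df * hamming u1 u2" using calculation(2) by (rule mult_le_mono2)
    moreover have "Suc df * 1 = Suc df" by simp
    ultimately show "dd \<le> hamming (u1 @ p u1) (u2 @ p u2)" using that by linarith
  next
    fix u1 u2 :: "'a list" assume a: "u1 \<in> words k" "u2 \<in> words k" "f u1 \<noteq> f u2"
    then have l: "length u1 = length u2" and ne: "u1 \<noteq> u2" by (auto simp add: words_def)
    have "hamming (u1 @ p u1) (u2 @ p u2) = (Suc df) * hamming u1 u2"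
      using l by (simp add: p_def hamming_append hamming_rep)
    moreover have "1 \<le> hamming u1 u2" using hamming_pos l ne by blast
    moreover have "Suc df * 1 \<le> Suc df * hamming u1 u2" using calculation(2) by (rule mult_le_mono2)
    moreover have "Suc df * 1 = Suc df" by simp
    ultimately show "df \<le> hamming (u1 @ p u1) (u2 @ p u2)" by linarith
  qed
  then show ?thesis by blast
qed


lemma plotkin_coord:
  fixes g :: "'x \<Rightarrow> 'a::finite" assumes fin: "finite W"
  shows "real (card (UNIV :: 'a set)) * (\<Sum>u\<in>W. \<Sum>v\<in>W. if g u \<noteq> g v then 1 else 0)
          \<le> (real (card (UNIV :: 'a set)) - 1) * real (card W)^2"
proof -
  define N where "N a = (\<Sum>u\<in>W. if g u = a then 1 else (0::real))" for a
  define M where "M = real (card W)"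
  define q where "q = real (card (UNIV :: 'a set))"
  have q0: "q > 0" unfolding q_def by (simp add: finite_UNIV_card_ge_0)
  have d: "(if g u = g v then 1 else 0::real) = (\<Sum>a\<in>UNIV. (if g u = a then 1 else 0) * (if g v = a then 1 else 0))" for u v
  proof -
    have "(\<Sum>a\<in>UNIV. (if g u = a then 1 else 0) * (if g v = a then 1 else (0::real)))
        = (\<Sum>a\<in>UNIV. if a = g u then (if g v = a then 1 else 0) else 0)"
      by (rule sum.cong) auto
    also have "\<dots> = (if g u = g v then 1 else 0)" by (simp add: sum.delta eq_commute)
    finally show ?thesis by simp
  qed
  have e1: "(\<Sum>u\<in>W. \<Sum>v\<in>W. if g u = g v then 1 else 0::real) = (\<Sum>a\<in>UNIV. N a * N a)"
  proof -
    have "(\<Sum>u\<in>W. \<Sum>v\<in>W. if g u = g v then 1 else 0::real)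
       = (\<Sum>u\<in>W. \<Sum>v\<in>W. \<Sum>a\<in>UNIV. (if g u = a then 1 else 0) * (if g v = a then 1 else 0))"
      by (simp only: d)
    also have "\<dots> = (\<Sum>u\<in>W. \<Sum>a\<in>UNIV. \<Sum>v\<in>W. (if g u = a then 1 else 0) * (if g v = a then 1 else 0))"
      by (rule sum.cong[OF refl], rule sum.swap)
    also have "\<dots> = (\<Sum>a\<in>UNIV. \<Sum>u\<in>W. \<Sum>v\<in>W. (if g u = a then 1 else 0) * (if g v = a then 1 else 0))"
      by (rule sum.swap)
    also have "\<dots> = (\<Sum>a\<in>UNIV. N a * N a)"
      unfolding N_def by (simp add: sum_product)
    finally show ?thesis .
  qed
  have e2: "(\<Sum>a\<in>UNIV. N a) = M"
  proof -
    have "(\<Sum>a\<in>UNIV. N a) = (\<Sum>u\<in>W. \<Sum>a\<in>UNIV. if g u = a then 1 else (0::real))"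
      unfolding N_def by (rule sum.swap)
    also have "\<dots> = M" by (simp add: M_def)
    finally show ?thesis .
  qed
  have e3: "(\<Sum>u\<in>W. \<Sum>v\<in>W. if g u \<noteq> g v then 1 else 0::real)
      = M^2 - (\<Sum>u\<in>W. \<Sum>v\<in>W. if g u = g v then 1 else 0::real)"
  proof -
    have "(\<Sum>u\<in>W. \<Sum>v\<in>W. if g u \<noteq> g v then 1 else 0::real)
       = (\<Sum>u\<in>W. \<Sum>v\<in>W. 1 - (if g u = g v then 1 else 0::real))"
      by (intro sum.cong) auto
    also have "\<dots> = M^2 - (\<Sum>u\<in>W. \<Sum>v\<in>W. if g u = g v then 1 else 0::real)"
      by (simp add: sum_subtractf M_def power2_eq_square)
    finally show ?thesis .
  qed
  have "0 \<le> (\<Sum>a\<in>UNIV. (N a - M/q)^2)" by (rule sum_nonneg) simp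
  also have "\<dots> = (\<Sum>a\<in>UNIV. N a * N a) - 2 * (M/q) * (\<Sum>a\<in>UNIV. N a) + q * (M/q)^2"
  proof -
    have "(\<Sum>a\<in>UNIV. (N a - M/q)^2) = (\<Sum>a\<in>UNIV. N a * N a - (2 * (M/q)) * N a + (M/q)^2)"
      by (rule sum.cong) (auto simp: power2_eq_square algebra_simps)
    also have "\<dots> = (\<Sum>a\<in>UNIV. N a * N a) - (\<Sum>a\<in>UNIV. (2 * (M/q)) * N a) + (\<Sum>a\<in>(UNIV::'a set). (M/q)^2)"
      by (simp add: sum.distrib sum_subtractf)
    also have "\<dots> = (\<Sum>a\<in>UNIV. N a * N a) - 2 * (M/q) * (\<Sum>a\<in>UNIV. N a) + q * (M/q)^2"
      by (simp add: sum_distrib_left q_def)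
    finally show ?thesis .
  qed
  finally have "M^2 / q \<le> (\<Sum>a\<in>UNIV. N a * N a)" using q0 unfolding e2
    by (simp add: power2_eq_square field_simps)
  then have "M^2 \<le> q * (\<Sum>a\<in>UNIV. N a * N a)" using q0 by (simp add: field_simps)
  then show ?thesis unfolding e3 e1 M_def[symmetric] q_def[symmetric]
    by (simp add: algebra_simps)
qed


lemma words_fin_card:
  shows "finite (words k :: ('a::finite) list set)" and "card (words k :: 'a list set) = card (UNIV::'a set) ^ k"
proof -
  have e: "words k = {xs :: 'a list. set xs \<subseteq> UNIV \<and> length xs = k}" by (simp add: words_def)
  show "finite (words k :: ('a::finite) list set)" unfolding e by (rule finite_lists_length_eq) simp
  show "card (words k :: 'a list set) = card (UNIV::'a set) ^ k" unfolding e by (rule card_lists_length_eq) simp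
qed

lemma main_bound:
  fixes f :: "('a::{finite,field}) list \<Rightarrow> 'b" and k dd df :: nat
  assumes ddf: "dd < df" and F: "is_FCC f k dd df r p"
  shows "real r \<ge>
    ((real (max_preimage f k) - 1) * real dd
      + (real (card (UNIV :: 'a set)) ^ k - real (max_preimage f k)) * real df)
    / (real (card (UNIV :: 'a set)) ^ (k - 1) * (real (card (UNIV :: 'a set)) - 1)) - real k"
proof -
  define q where "q = real (card (UNIV :: 'a set))"
  define W where "W = (words k :: 'a list set)"
  define L where "L = max_preimage f k"
  define c where "c u = u @ p u" for u
  define n where "n = k + r"
  define M where "M = real (card W)"
  define X where "X = (real L - 1) * real dd + (M - real L) * real df"
  have finW: "finite W" unfolding W_def by (rule words_fin_card)
  have M: "M = q ^ k" unfolding M_def W_def q_def by (simp add: words_fin_card)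
  have "card {0::'a, 1} \<le> card (UNIV :: 'a set)" by (rule card_mono) auto
  then have q2: "q \<ge> 2" unfolding q_def by simp
  have lenc: "length (c u) = n" if "u \<in> W" for u
    using F that unfolding is_FCC_def c_def n_def W_def words_def by auto
  define S where "S = (\<Sum>u\<in>W. \<Sum>v\<in>W. real (hamming (c u) (c v)))"
  have hs: "real (hamming (c u) (c v)) = (\<Sum>i<n. if c u ! i \<noteq> c v ! i then 1 else 0)" if "u \<in> W" for u v
    unfolding hamming_sum lenc[OF that] of_nat_sum by (intro sum.cong) auto
  have "S = (\<Sum>u\<in>W. \<Sum>v\<in>W. \<Sum>i<n. if c u ! i \<noteq> c v ! i then 1 else 0)"
    unfolding S_def by (intro sum.cong refl) (simp add: hs)
  also have "\<dots> = (\<Sum>u\<in>W. \<Sum>i<n. \<Sum>v\<in>W. if c u ! i \<noteq> c v ! i then 1 else 0)"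
    by (rule sum.cong[OF refl], rule sum.swap)
  also have "\<dots> = (\<Sum>i<n. \<Sum>u\<in>W. \<Sum>v\<in>W. if c u ! i \<noteq> c v ! i then 1 else 0)"
    by (rule sum.swap)
  finally have Seq: "S = \<dots>" .
  have up: "q * S \<le> real n * (q - 1) * M^2"
  proof -
    have "q * S = (\<Sum>i<n. q * (\<Sum>u\<in>W. \<Sum>v\<in>W. if c u ! i \<noteq> c v ! i then 1 else 0))"
      unfolding Seq by (simp add: sum_distrib_left)
    also have "\<dots> \<le> (\<Sum>i<n. (q - 1) * M^2)"
      unfolding q_def M_def
      by (rule sum_mono, rule plotkin_coord[OF finW, of "\<lambda>u. c u ! i" for i])
    also have "\<dots> = real n * (q - 1) * M^2" by simp
    finally show ?thesis .
  qed
  have low: "X \<le> (\<Sum>v\<in>W. real (hamming (c u) (c v)))" if uW: "u \<in> W" for u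
  proof -
    define C where "C = {v\<in>W. f v = f u}"
    define s where "s = card C"
    have CW: "C \<subseteq> W" unfolding C_def by auto
    have finC: "finite C" using finW CW finite_subset by blast
    have uC: "u \<in> C" using uW unfolding C_def by auto
    have s1: "s \<ge> 1" unfolding s_def using finC uC by (simp add: Suc_le_eq card_gt_0_iff; blast)
    have sL: "s \<le> L"
    proof -
      have "s \<in> (\<lambda>\<alpha>. card {u\<in>words k. f u = \<alpha>}) ` (f ` words k)"
        using uW unfolding s_def C_def W_def by blast
      moreover have "finite ((\<lambda>\<alpha>. card {u\<in>words k. f u = \<alpha>}) ` (f ` (words k :: 'a list set)))"
        using finW unfolding W_def by simp
      ultimately show ?thesis unfolding L_def max_preimage_def by (simp add: Max_ge)
    qed
    have sum_split: "(\<Sum>v\<in>W. real (hamming (c u) (c v)))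
        = (\<Sum>v\<in>W - C. real (hamming (c u) (c v))) + (\<Sum>v\<in>C. real (hamming (c u) (c v)))"
      using sum.subset_diff[OF CW finW] by simp
    have a1: "real (card (C - {u})) * real dd \<le> (\<Sum>v\<in>C - {u}. real (hamming (c u) (c v)))"
    proof (rule sum_bounded_below)
      fix v assume "v \<in> C - {u}"
      then have "v \<in> W" "v \<noteq> u" using CW by auto
      then show "real dd \<le> real (hamming (c u) (c v))"
        using F uW unfolding is_FCC_def c_def W_def by auto
    qed
    have a2: "(\<Sum>v\<in>C - {u}. real (hamming (c u) (c v))) \<le> (\<Sum>v\<in>C. real (hamming (c u) (c v)))"
      by (rule sum_mono2[OF finC]) auto
    have a3: "real (card (W - C)) * real df \<le> (\<Sum>v\<in>W - C. real (hamming (c u) (c v)))"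
    proof (rule sum_bounded_below)
      fix v assume "v \<in> W - C"
      then have "v \<in> W" "f u \<noteq> f v" unfolding C_def by auto
      then show "real df \<le> real (hamming (c u) (c v))"
        using F uW unfolding is_FCC_def c_def W_def by auto
    qed
    have cd1: "real (card (C - {u})) = real s - 1" using uC finC s1 unfolding s_def by simp
    have cd2: "real (card (W - C)) = M - real s" unfolding M_def s_def
      using card_Diff_subset[OF finC CW] card_mono[OF finW CW] by simp
    have "X \<le> (real s - 1) * real dd + (M - real s) * real df"
    proof -
      have "0 \<le> (real L - real s) * (real df - real dd)" using sL ddf by simp
      then show ?thesis unfolding X_def by (simp add: algebra_simps)
    qed
    then show ?thesis using sum_split a1[unfolded cd1] a2 a3[unfolded cd2] by linarith
  qed
  have "M * X \<le> S"
  proof -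
    have "(\<Sum>u\<in>W. X) \<le> S" unfolding S_def by (rule sum_mono) (rule low)
    then show ?thesis unfolding M_def by simp
  qed
  then have "q * (M * X) \<le> q * S" using q2 by (intro mult_left_mono) auto
  then have "M * (q * X) \<le> M * (real n * (q - 1) * M)" using up
    by (simp add: power2_eq_square mult_ac)
  moreover have "M > 0" using M q2 by simp
  ultimately have qX: "q * X \<le> real n * (q - 1) * M" by simp
  have key: "X \<le> real n * (q ^ (k - 1) * (q - 1))"
  proof (cases k)
    case 0
    then have "M = 1" using M by simp
    then have "q * X \<le> real n * (q - 1)" using qX by simp
    moreover have "X \<le> q * X \<or> X < 0"
    proof (cases "X < 0")
      case False
      then have "1 * X \<le> q * X" using q2 by (intro mult_right_mono) auto
      then show ?thesis by simp
    qed simp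
    moreover have "0 \<le> real n * (q - 1)" using q2 by simp
    ultimately show ?thesis using 0 by auto
  next
    case (Suc j)
    then have "M = q * q ^ (k - 1)" using M by simp
    then have "q * X \<le> q * (real n * (q ^ (k - 1) * (q - 1)))" using qX by (simp add: algebra_simps)
    then show ?thesis using q2 by simp
  qed
  have pos: "q ^ (k - 1) * (q - 1) > 0" using q2 by simp
  have "X / (q ^ (k - 1) * (q - 1)) \<le> real n" using key pos by (simp add: divide_le_eq)
  then show ?thesis unfolding X_def L_def[symmetric] M q_def[symmetric] n_def by simp
qed

theorem theorem11:
  fixes f :: "('a::{finite,field}) list \<Rightarrow> 'b" and k dd df :: nat
  assumes "dd < df"
  shows "real (r_f f k dd df) \<ge>
    ((real (max_preimage f k) - 1) * real dd
      + (real (card (UNIV :: 'a set)) ^ k - real (max_preimage f k)) * real df)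
    / (real (card (UNIV :: 'a set)) ^ (k - 1) * (real (card (UNIV :: 'a set)) - 1)) - real k"
proof -
  obtain r0 p0 where "is_FCC f k dd df r0 p0" using FCC_exists[OF assms] by blast
  then have "\<exists>p. is_FCC f k dd df (r_f f k dd df) p"
    unfolding r_f_def by (rule LeastI[where P = "\<lambda>r. \<exists>p. is_FCC f k dd df r p", OF exI])
  then obtain p where "is_FCC f k dd df (r_f f k dd df) p" by blast
  then show ?thesis by (rule main_bound[OF assms])
qed

end
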